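(* Let $m_x,m_y,m_z\in(0,1)$, $\alpha\in(0,1)$, $c>0$ and $\mu>0$, and let $\rho:[0,\infty)\to[0,1]$ be a decreasing function with $\rho(0)=1$ and $\lim_{w\to\infty}\rho(w)=0$. Consider the discrete-time system on the state space $\{(x,y,z): x\ge 0,\ y\ge 0,\ z>0\}$ $$\begin{aligned} x(t+1)&=(1-m_x)x(t)+\alpha c\,\rho(c\,x(t))\,\frac{y(t)}{y(t)+z(t)}\,x(t),\\ y(t+1)&=(1-m_y)y(t)+(1-\alpha)c\,\rho(c\,x(t))\,\frac{y(t)}{y(t)+z(t)}\,x(t)+c\,\rho(c\,x(t))\,\frac{z(t)}{y(t)+z(t)}\,x(t),\\ z(t+1)&=(1-m_z)z(t)+\mu . \end{aligned}$$ Then the extinction equilibrium $\left(0,0,\dfrac{\mu}{m_z}\right)$ is locally asymptotically stable: it is Lyapunov stable, and there is a neighborhood $U$ of it in the state space such that every trajectory starting in $U$ converges to $\left(0,0,\dfrac{\mu}{m_z}\right)$ as $t\to\infty$.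
   Context: The variables $x,y,z$ are the numbers of adult females, adult males and "supermales" (YY males, whose offspring are all male) of an invasive fish population; $t$ counts life cycles. The mortality rates are $m_i=1-p_iq_i$ with survival probabilities $p_i,q_i\in(0,1)$ in the two life stages, $c$ is the fecundity, $\alpha$ is the fraction of surviving juveniles becoming female, $\rho$ is the density-dependent juvenile survival probability, and $\mu$ is the number of supermales released per life cycle. *)

theory Defs
  imports "HOL-Analysis.Analysis"
begin

definition supermale_step ::
  "real \<Rightarrow> real \<Rightarrow> real \<Rightarrow> real \<Rightarrow> real \<Rightarrow> real \<Rightarrow> (real \<Rightarrow> real)
     \<Rightarrow> real \<times> real \<times> real \<Rightarrow> real \<times> real \<times> real" where
  "supermale_step mx my mz \<alpha> c \<mu> \<rho> s =
     (case s of (x, y, z) \<Rightarrow>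
       ((1 - mx) * x + \<alpha> * c * \<rho> (c * x) * (y / (y + z)) * x,
        (1 - my) * y + (1 - \<alpha>) * c * \<rho> (c * x) * (y / (y + z)) * x
                     + c * \<rho> (c * x) * (z / (y + z)) * x,
        (1 - mz) * z + \<mu>))"

definition supermale_space :: "(real \<times> real \<times> real) set" where
  "supermale_space = {(x, y, z). x \<ge> 0 \<and> y \<ge> 0 \<and> z > 0}"

end

theory Submission
  imports Defs
begin

lemma step_bound:
  fixes mx my \<alpha> c r K \<eta> x y z :: real
  assumes H: "0 < mx" "mx < 1" "0 < my" "my < 1" "0 < \<alpha>" "\<alpha> < 1" "c > 0"
     "0 \<le> r" "r \<le> 1" "K \<ge> 1" "2*c \<le> K*mx" "4*\<alpha>*c*\<eta> \<le> mx"
     "x \<ge> 0" "y \<ge> 0" "z > 0" "y \<le> \<eta> * z"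
  defines "x' \<equiv> (1 - mx) * x + \<alpha> * c * r * (y / (y + z)) * x"
    and "y' \<equiv> (1 - my) * y + (1 - \<alpha>) * c * r * (y / (y + z)) * x + c * r * (z / (y + z)) * x"
  shows "x' \<ge> 0 \<and> y' \<ge> 0 \<and> K * x' + y' \<le> max (1-mx/4) (1-my) * (K * x + y)"
proof -
  define a where "a = y/(y+z)"
  define b where "b = z/(y+z)"
  have a0: "a \<ge> 0" using H(14,15) a_def by simp
  have b0: "b \<ge> 0" using H(14,15) b_def by simp
  have yz: "y + z > 0" using H(14,15) by simp
  have ab: "a + b = 1" using yz unfolding a_def b_def by (simp add: add_divide_distrib[symmetric])
  have aeta: "a \<le> \<eta>"
  proof -
    have "a \<le> y / z" unfolding a_def using H by (simp add: frac_le)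
    also have "\<dots> \<le> \<eta>" using H by (simp add: divide_le_eq)
    finally show ?thesis .
  qed
  have x'e: "x' = (1 - mx) * x + \<alpha> * c * r * a * x" using x'_def a_def by simp
  have y'e: "y' = (1 - my) * y + (1 - \<alpha>) * c * r * a * x + c * r * b * x" using y'_def a_def b_def by simp
  have p1: "\<alpha> * c * r * a * x \<ge> 0" using H a0 by simp
  have p2: "(1 - \<alpha>) * c * r * a * x \<ge> 0" using H a0 by simp
  have p3: "c * r * b * x \<ge> 0" using H b0 by simp
  have x'0: "x' \<ge> 0" using x'e p1 assms by simp
  have y'0: "y' \<ge> 0" using y'e p2 p3 assms by simp
  have q1: "(1 - \<alpha>) * c * r * a * x + c * r * b * x \<le> c * x"
  proof -
    have "(1 - \<alpha>) * c * r * a * x + c * r * b * x = c*r*x*(a+b) - \<alpha> * c * r * a * x" by (simp add: algebra_simps)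
    also have "\<dots> \<le> c*r*x" using ab p1 by simp
    also have "\<dots> \<le> c*x" using H mult_left_mono[OF mult_right_le_one_le[of x r], of c] by (simp add: ac_simps)
    finally show ?thesis .
  qed
  have q2: "K * (\<alpha> * c * r * a * x) \<le> K * mx / 4 * x"
  proof -
    have "\<alpha> * c * r * a \<le> \<alpha> * c * 1 * \<eta>"
      using H a0 aeta by (intro mult_mono) auto
    hence "4*(\<alpha> * c * r * a) \<le> 4*(\<alpha> * c * \<eta>)" by simp
    hence "\<alpha> * c * r * a \<le> mx/4" using H(12) by simp
    hence "\<alpha> * c * r * a * x \<le> mx/4 * x" using H(13) by (rule mult_right_mono)
    hence "K*(\<alpha> * c * r * a * x) \<le> K*(mx/4 * x)" using H(10) by (intro mult_left_mono) auto
    thus ?thesis by simp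
  qed
  have "K * x' + y' \<le> K*(1-mx)*x + K*mx/4*x + (1-my)*y + c*x"
  proof -
    have "K * x' = K*(1-mx)*x + K * (\<alpha> * c * r * a * x)" unfolding x'e by (simp add: algebra_simps)
    thus ?thesis using y'e q1 q2 by linarith
  qed
  also have "\<dots> \<le> K*(1-mx/4)*x + (1-my)*y"
  proof -
    have "(2*c)*x \<le> (K*mx)*x" using H(11,13) by (rule mult_right_mono)
    thus ?thesis by (simp add: algebra_simps)
  qed
  also have "\<dots> \<le> max (1-mx/4) (1-my) * (K*x) + max (1-mx/4) (1-my) * y"
  proof -
    have "(1-mx/4)*(K*x) \<le> max (1-mx/4) (1-my) * (K*x)" using H by (intro mult_right_mono) auto
    moreover have "(1-my)*y \<le> max (1-mx/4) (1-my) * y" using H by (intro mult_right_mono) auto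
    ultimately show ?thesis by (simp add: ac_simps)
  qed
  finally show ?thesis using x'0 y'0 by (simp add: algebra_simps)
qed

lemma dist3:
  fixes x y z w :: real
  shows "dist (x,y,z) (0,0,w) \<le> \<bar>x\<bar> + \<bar>y\<bar> + \<bar>z - w\<bar>"
    and "\<bar>x\<bar> \<le> dist (x,y,z) (0,0,w)"
    and "\<bar>y\<bar> \<le> dist (x,y,z) (0,0,w)"
    and "\<bar>z - w\<bar> \<le> dist (x,y,z) (0,0,w)"
proof -
  have e: "dist (x,y,z) (0,0,w) = sqrt (x^2 + (sqrt (y^2 + (z-w)^2))^2)"
    by (simp add: dist_Pair_Pair dist_real_def)
  have s: "(sqrt (y^2 + (z-w)^2))^2 = y^2 + (z-w)^2" by simp
  show "dist (x,y,z) (0,0,w) \<le> \<bar>x\<bar> + \<bar>y\<bar> + \<bar>z - w\<bar>"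
  proof -
    have "dist (x,y,z) (0,0,w) \<le> \<bar>x\<bar> + \<bar>sqrt (y^2 + (z-w)^2)\<bar>"
      unfolding e by (rule sqrt_sum_squares_le_sum_abs)
    also have "\<bar>sqrt (y^2 + (z-w)^2)\<bar> \<le> \<bar>y\<bar> + \<bar>z - w\<bar>"
      using sqrt_sum_squares_le_sum_abs[of y "z-w"] by simp
    finally show ?thesis by simp
  qed
  show "\<bar>x\<bar> \<le> dist (x,y,z) (0,0,w)"
    unfolding e using real_sqrt_abs[of x] real_sqrt_le_mono[of "x^2" "x^2 + (sqrt (y^2 + (z-w)^2))^2"] by simp
  have h: "sqrt (y^2 + (z-w)^2) \<le> dist (x,y,z) (0,0,w)"
    unfolding e using real_sqrt_le_mono[of "(sqrt (y^2 + (z-w)^2))^2" "x^2 + (sqrt (y^2 + (z-w)^2))^2"] by simp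
  show "\<bar>y\<bar> \<le> dist (x,y,z) (0,0,w)"
  proof -
    have "\<bar>y\<bar> = sqrt (y^2)" by simp
    also have "\<dots> \<le> sqrt (y^2 + (z-w)^2)" by (rule real_sqrt_le_mono) simp
    finally show ?thesis using h by linarith
  qed
  show "\<bar>z - w\<bar> \<le> dist (x,y,z) (0,0,w)"
  proof -
    have "\<bar>z - w\<bar> = sqrt ((z-w)^2)" by simp
    also have "\<dots> \<le> sqrt (y^2 + (z-w)^2)" by (rule real_sqrt_le_mono) simp
    finally show ?thesis using h by linarith
  qed
qed

lemma invariant:
  fixes mx my mz \<alpha> c \<mu> K \<eta> x0 y0 z0 :: real and \<rho> :: "real \<Rightarrow> real"
  assumes H: "0 < mx" "mx < 1" "0 < my" "my < 1" "0 < mz" "mz < 1"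
     "0 < \<alpha>" "\<alpha> < 1" "c > 0" "\<mu> > 0"
     "\<forall>w. w \<ge> 0 \<longrightarrow> 0 \<le> \<rho> w \<and> \<rho> w \<le> 1"
     "K \<ge> 1" "2*c \<le> K*mx" "4*\<alpha>*c*\<eta> \<le> mx" "\<eta> \<ge> 0"
     "x0 \<ge> 0" "y0 \<ge> 0" "z0 > 0" "\<bar>z0 - \<mu>/mz\<bar> \<le> (\<mu>/mz)/2"
     "K*x0 + y0 \<le> \<eta> * (\<mu>/mz) / 2"
  shows "\<forall>x y z. (supermale_step mx my mz \<alpha> c \<mu> \<rho> ^^ t) (x0,y0,z0) = (x,y,z) \<longrightarrow>
     x \<ge> 0 \<and> y \<ge> 0 \<and> z > 0 \<and> z - \<mu>/mz = (1-mz)^t * (z0 - \<mu>/mz) \<and>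
     K*x + y \<le> (max (1-mx/4) (1-my))^t * (K*x0 + y0)"
proof (induction t)
  case 0
  then show ?case using H(16,17,18) by simp
next
  case (Suc t)
  define zs where "zs = \<mu>/mz"
  define lam where "lam = max (1-mx/4) (1-my)"
  have zs0: "zs > 0" using H(5,10) unfolding zs_def by simp
  have lam0: "0 \<le> lam" "lam \<le> 1" using H(1,2,3,4) unfolding lam_def by auto
  obtain x y z where xyz: "(supermale_step mx my mz \<alpha> c \<mu> \<rho> ^^ t) (x0,y0,z0) = (x,y,z)"
    by (metis prod_cases3)
  have IH: "x \<ge> 0" "y \<ge> 0" "z > 0" "z - zs = (1-mz)^t * (z0 - zs)"
     "K*x + y \<le> lam^t * (K*x0 + y0)" using Suc xyz unfolding zs_def lam_def by auto
  have V0: "K*x0 + y0 \<ge> 0" using H(12,16,17) by simp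
  have "\<bar>z - zs\<bar> = (1-mz)^t * \<bar>z0 - zs\<bar>" using IH(4) H(5,6) by (simp add: abs_mult)
  also have "\<dots> \<le> 1 * \<bar>z0 - zs\<bar>" using H(5,6) by (intro mult_right_mono power_le_one) auto
  finally have zc: "\<bar>z - zs\<bar> \<le> zs/2" using H(19) unfolding zs_def by simp
  have "y \<le> K*x + y" using IH(1) H(12) by simp
  also have "\<dots> \<le> lam^t * (K*x0 + y0)" by (rule IH(5))
  also have "\<dots> \<le> 1 * (K*x0 + y0)" using lam0 V0 by (intro mult_right_mono power_le_one) auto
  also have "\<dots> \<le> \<eta> * (zs/2)" using H(20) unfolding zs_def by simp
  also have "\<dots> \<le> \<eta> * z"
  proof -
    have "zs/2 \<le> z" using zc by linarith
    thus ?thesis using H(15) by (rule mult_left_mono)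
  qed
  finally have yeta: "y \<le> \<eta> * z" .
  have r: "0 \<le> \<rho> (c*x)" "\<rho> (c*x) \<le> 1" using H(11)[rule_format, of "c*x"] IH(1) H(9) by auto
  note sb = step_bound[OF H(1,2,3,4,7,8,9) r H(12,13,14) IH(1,2,3) yeta]
  have st: "(supermale_step mx my mz \<alpha> c \<mu> \<rho> ^^ Suc t) (x0,y0,z0) =
     ((1 - mx) * x + \<alpha> * c * \<rho> (c * x) * (y / (y + z)) * x,
        (1 - my) * y + (1 - \<alpha>) * c * \<rho> (c * x) * (y / (y + z)) * x
                     + c * \<rho> (c * x) * (z / (y + z)) * x,
        (1 - mz) * z + \<mu>)" using xyz by (simp add: supermale_step_def)
  have zn: "(1 - mz) * z + \<mu> - zs = (1-mz)^Suc t * (z0 - zs)"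
  proof -
    have "(1 - mz) * z + \<mu> - zs = (1-mz)*(z - zs)" using H(5) unfolding zs_def by (simp add: field_simps)
    thus ?thesis using IH(4) by simp
  qed
  have zp: "(1 - mz) * z + \<mu> > 0" using H(6,10) IH(3) by (simp add: add_nonneg_pos)
  have "K * ((1 - mx) * x + \<alpha> * c * \<rho> (c * x) * (y / (y + z)) * x) + ((1 - my) * y + (1 - \<alpha>) * c * \<rho> (c * x) * (y / (y + z)) * x
                     + c * \<rho> (c * x) * (z / (y + z)) * x) \<le> lam * (K*x+y)" using sb unfolding lam_def by blast
  also have "\<dots> \<le> lam * (lam^t * (K*x0 + y0))" using IH(5) lam0 by (intro mult_left_mono) auto
  finally have vn: "K * ((1 - mx) * x + \<alpha> * c * \<rho> (c * x) * (y / (y + z)) * x) + ((1 - my) * y + (1 - \<alpha>) * c * \<rho> (c * x) * (y / (y + z)) * x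
                     + c * \<rho> (c * x) * (z / (y + z)) * x) \<le> lam^Suc t * (K*x0 + y0)" by simp
  show ?case using st sb zn zp vn unfolding zs_def lam_def by auto
qed

theorem mainTheorem2:
  fixes mx my mz \<alpha> c \<mu> :: real and \<rho> :: "real \<Rightarrow> real"
  assumes "0 < mx" "mx < 1" "0 < my" "my < 1" "0 < mz" "mz < 1"
    and "0 < \<alpha>" "\<alpha> < 1" "c > 0" "\<mu> > 0"
    and "\<And>w. w \<ge> 0 \<Longrightarrow> 0 \<le> \<rho> w \<and> \<rho> w \<le> 1"
    and "\<And>v w. 0 \<le> v \<Longrightarrow> v \<le> w \<Longrightarrow> \<rho> w \<le> \<rho> v"
    and "\<rho> 0 = 1"
    and "(\<rho> \<longlongrightarrow> 0) at_top"
  defines "F \<equiv> supermale_step mx my mz \<alpha> c \<mu> \<rho>"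
    and "e \<equiv> (0::real, 0::real, \<mu> / mz)"
  shows "(\<forall>\<epsilon>>0. \<exists>\<delta>>0. \<forall>p\<in>supermale_space. dist p e < \<delta> \<longrightarrow>
            (\<forall>t. dist ((F ^^ t) p) e < \<epsilon>))
       \<and> (\<exists>\<delta>>0. \<forall>p\<in>supermale_space. dist p e < \<delta> \<longrightarrow>
            (\<lambda>t. (F ^^ t) p) \<longlonglongrightarrow> e)"
proof -
  note H = assms(1-11)
  define zs where "zs = \<mu>/mz"
  define K where "K = max 1 (2*c/mx)"
  define \<eta> where "\<eta> = mx/(4*\<alpha>*c)"
  define lam where "lam = max (1-mx/4) (1-my)"
  define \<delta>0 where "\<delta>0 = min (zs/2) (\<eta>*zs/(2*(K+1)))"
  have zs0: "zs > 0" using H(5,10) unfolding zs_def by simp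
  have K1: "K \<ge> 1" unfolding K_def by simp
  have K2: "2*c \<le> K*mx"
  proof -
    have "2*c/mx \<le> K" unfolding K_def by simp
    thus ?thesis using H(1) by (simp add: divide_le_eq mult.commute)
  qed
  have eta0: "\<eta> > 0" using H(1,7,9) unfolding \<eta>_def by simp
  have eta1: "4*\<alpha>*c*\<eta> \<le> mx" using H(7,9) unfolding \<eta>_def by simp
  have lam0: "0 \<le> lam" "lam < 1" using H(1,2,3,4) unfolding lam_def by auto
  have d0: "\<delta>0 > 0" unfolding \<delta>0_def using zs0 eta0 K1 by simp
  have e': "e = (0,0,zs)" unfolding e_def zs_def by simp
  have bound: "\<forall>t. dist ((F^^t) (x0,y0,z0)) e \<le> lam^t*(K*x0+y0) + (1-mz)^t*\<bar>z0-zs\<bar>"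
     and V0: "K*x0+y0 \<le> (K+1) * dist (x0,y0,z0) e" and Z0: "\<bar>z0-zs\<bar> \<le> dist (x0,y0,z0) e"
     and V00: "0 \<le> K*x0+y0"
    if sp: "(x0,y0,z0) \<in> supermale_space" and dd: "dist (x0,y0,z0) e < \<delta>0" for x0 y0 z0
  proof -
    have x0: "x0 \<ge> 0" and y0: "y0 \<ge> 0" and z0: "z0 > 0" using sp unfolding supermale_space_def by auto
    define d where "d = dist (x0,y0,z0) e"
    have xd: "x0 \<le> d" using dist3(2)[of x0 y0 z0 zs] x0 unfolding d_def e' by simp
    have yd: "y0 \<le> d" using dist3(3)[of y0 x0 z0 zs] y0 unfolding d_def e' by simp
    show zd: "\<bar>z0-zs\<bar> \<le> dist (x0,y0,z0) e" using dist3(4)[of z0 zs x0 y0] unfolding e' by simp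
    have "K*x0 \<le> K*d" using xd K1 by simp
    thus VV: "K*x0+y0 \<le> (K+1) * dist (x0,y0,z0) e" using yd unfolding d_def by (simp add: algebra_simps)
    show V00: "0 \<le> K*x0+y0" using x0 y0 K1 by simp
    have dl: "d < \<delta>0" using dd unfolding d_def .
    have zc: "\<bar>z0 - \<mu>/mz\<bar> \<le> (\<mu>/mz)/2" using zd dl unfolding \<delta>0_def zs_def d_def by simp
    have "(K+1)*d \<le> (K+1) * (\<eta>*zs/(2*(K+1)))" using dl K1 unfolding \<delta>0_def by (intro mult_left_mono) auto
    also have "\<dots> = \<eta>*zs/2" using K1 by (simp add: field_simps)
    finally have vc: "K*x0 + y0 \<le> \<eta> * (\<mu>/mz) / 2" using VV unfolding d_def zs_def by simp
    have rh: "\<forall>w. w \<ge> 0 \<longrightarrow> 0 \<le> \<rho> w \<and> \<rho> w \<le> 1" using H(11) by blast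
    note inv = invariant[OF H(1-10) rh K1 K2 eta1 less_imp_le[OF eta0] x0 y0 z0 zc vc]
    show "\<forall>t. dist ((F^^t) (x0,y0,z0)) e \<le> lam^t*(K*x0+y0) + (1-mz)^t*\<bar>z0-zs\<bar>"
    proof
      fix t
      obtain x y z where xyz: "(F^^t) (x0,y0,z0) = (x,y,z)" by (metis prod_cases3)
      have I: "x \<ge> 0" "y \<ge> 0" "z - zs = (1-mz)^t * (z0 - zs)" "K*x + y \<le> lam^t * (K*x0 + y0)"
      proof -
        have xyz': "(supermale_step mx my mz \<alpha> c \<mu> \<rho> ^^ t) (x0,y0,z0) = (x,y,z)" using xyz unfolding F_def .
        show "x \<ge> 0" "y \<ge> 0" "z - zs = (1-mz)^t * (z0 - zs)" "K*x + y \<le> lam^t * (K*x0 + y0)"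
          using inv[where t=t, rule_format, OF xyz'] unfolding zs_def lam_def by simp_all
      qed
      have "dist ((F^^t) (x0,y0,z0)) e \<le> \<bar>x\<bar> + \<bar>y\<bar> + \<bar>z - zs\<bar>" unfolding xyz e' by (rule dist3(1))
      also have "\<dots> \<le> (K*x + y) + \<bar>z - zs\<bar>" using I(1,2) K1 mult_right_mono[OF K1 I(1)] by simp
      also have "\<bar>z - zs\<bar> = (1-mz)^t*\<bar>z0-zs\<bar>" using I(3) H(5,6) by (simp add: abs_mult)
      finally show "dist ((F^^t) (x0,y0,z0)) e \<le> lam^t*(K*x0+y0) + (1-mz)^t*\<bar>z0-zs\<bar>" using I(4) by linarith
    qed
  qed
  show ?thesis
  proof
    show "\<forall>\<epsilon>>0. \<exists>\<delta>>0. \<forall>p\<in>supermale_space. dist p e < \<delta> \<longrightarrow> (\<forall>t. dist ((F ^^ t) p) e < \<epsilon>)"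
    proof (intro allI impI)
      fix \<epsilon> :: real assume ep: "\<epsilon> > 0"
      show "\<exists>\<delta>>0. \<forall>p\<in>supermale_space. dist p e < \<delta> \<longrightarrow> (\<forall>t. dist ((F ^^ t) p) e < \<epsilon>)"
      proof (intro exI[of _ "min \<delta>0 (\<epsilon>/(K+2))"] conjI ballI impI allI)
        show "min \<delta>0 (\<epsilon>/(K+2)) > 0" using d0 ep K1 by simp
        fix p t assume sp: "p \<in> supermale_space" and dp: "dist p e < min \<delta>0 (\<epsilon>/(K+2))"
        obtain x0 y0 z0 where p: "p = (x0,y0,z0)" by (metis prod_cases3)
        define d where "d = dist p e"
        have dl: "dist (x0,y0,z0) e < \<delta>0" using dp p by simp
        note b = bound[OF sp[unfolded p] dl] V0[OF sp[unfolded p] dl] Z0[OF sp[unfolded p] dl] V00[OF sp[unfolded p] dl]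
        have "lam^t*(K*x0+y0) \<le> 1*(K*x0+y0)" using lam0 b(4) by (intro mult_right_mono power_le_one) auto
        moreover have "(1-mz)^t*\<bar>z0-zs\<bar> \<le> 1*\<bar>z0-zs\<bar>" using H(5,6) by (intro mult_right_mono power_le_one) auto
        moreover have "dist ((F ^^ t) p) e \<le> lam ^ t * (K * x0 + y0) + (1 - mz) ^ t * \<bar>z0 - zs\<bar>"
          using b(1) p by simp
        ultimately have "dist ((F ^^ t) p) e \<le> (K+1)*d + d" using b(2,3) p unfolding d_def by simp
        also have "\<dots> = (K+2)*d" by (simp add: algebra_simps)
        also have "\<dots> < (K+2)*(\<epsilon>/(K+2))" using dp K1 unfolding d_def by (intro mult_strict_left_mono) auto
        also have "\<dots> = \<epsilon>" using K1 by simp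
        finally show "dist ((F ^^ t) p) e < \<epsilon>" .
      qed
    qed
    show "\<exists>\<delta>>0. \<forall>p\<in>supermale_space. dist p e < \<delta> \<longrightarrow> (\<lambda>t. (F ^^ t) p) \<longlonglongrightarrow> e"
    proof (intro exI[of _ \<delta>0] conjI ballI impI)
      show "\<delta>0 > 0" by (rule d0)
      fix p assume sp: "p \<in> supermale_space" and dp: "dist p e < \<delta>0"
      obtain x0 y0 z0 where p: "p = (x0,y0,z0)" by (metis prod_cases3)
      note b = bound[OF sp[unfolded p] dp[unfolded p]]
      have l1: "(\<lambda>t. lam^t) \<longlonglongrightarrow> 0" by (rule LIMSEQ_power_zero) (use lam0 in simp)
      have l2: "(\<lambda>t. (1-mz)^t) \<longlonglongrightarrow> 0" by (rule LIMSEQ_power_zero) (use H(5,6) in simp)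
      have g': "(\<lambda>t. lam^t*(K*x0+y0) + (1-mz)^t*\<bar>z0-zs\<bar>) \<longlonglongrightarrow> 0"
        by (rule tendsto_add_zero[OF tendsto_mult_left_zero[OF l1] tendsto_mult_left_zero[OF l2]])
      have le1: "\<forall>t. (0::real) \<le> dist ((F ^^ t) p) e" by simp
      have le2: "\<forall>t. dist ((F ^^ t) p) e \<le> lam^t*(K*x0+y0) + (1-mz)^t*\<bar>z0-zs\<bar>" unfolding p by (rule b)
      have "(\<lambda>t. dist ((F ^^ t) p) e) \<longlonglongrightarrow> 0"
        by (rule tendsto_sandwich[OF always_eventually[OF le1] always_eventually[OF le2] tendsto_const g'])
      thus "(\<lambda>t. (F ^^ t) p) \<longlonglongrightarrow> e" by (subst tendsto_dist_iff)
    qed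
  qed
qed

end
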